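(* The sets $$(\mathrm s^{(n,k)},T,\varepsilon)=\{S\in\mathcal M_{\mathcal G,\Gamma}:\mathrm s^{(n,k)}(T,S)<\varepsilon\},\qquad n,k\in\mathbb N,\ \varepsilon>0,\ T\in\mathcal M_{\mathcal G,\Gamma},$$ form a base of the topology on $\mathcal M_{\mathcal G,\Gamma}$ induced by the metric $\mathrm m_{\mathcal G,\Gamma}$, where $\mathrm s^{(n,k)}(T,S)=\sup_{g\in\Gamma\cup(\bigcup_{i\le n}K_i)}\mathrm a_k(T^g,S^g)$.
   Context: $(X,\Sigma,\mu)$ is a separable Lebesgue space with a non-atomic probability measure $\mu$. $\mathcal A$ is the group of invertible measure-preserving transformations of $X$, two transformations being identified if they agree outside a null set. Fix a countable family $\{A_i\}_{i\in\mathbb N}\subset\Sigma$ that generates $\Sigma$ and is dense in $\Sigma$ (for every $A\in\Sigma$ and $\varepsilon>0$ there is $i$ with $\mu(A_i\triangle A)<\varepsilon$). For $T,S\in\mathcal A$ put $\mathrm d(T,S)=\sum_{i}2^{-i}\big(\mu(TA_i\triangle SA_i)+\mu(T^{-1}A_i\triangle S^{-1}A_i)\big)$, $\mathrm a(T,S)=\sum_{i,j}2^{-(i+j)}|\mu(TA_i\cap A_j)-\mu(SA_i\cap A_j)|$, and $\mathrm a_k(T,S)=\sum_{i,j\le k}2^{-(i+j)}|\mu(TA_i\cap A_j)-\mu(SA_i\cap A_j)|$. $\mathcal G$ is a Hausdorff locally compact group with a countable neighborhood base. Fix an at most countable family $\{K_i\}$ of compact subsets of $\mathcal G$ with nonempty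 interiors whose union contains a set generating $\mathcal G$ (if the family has fewer than $n$ members, $\bigcup_{i\le n}K_i$ means the union of all of them). An action of $\mathcal G$ is a family $T=\{T^g\}_{g\in\mathcal G}\subset\mathcal A$ with $T^gT^h=T^{gh}$ for all $g,h$ and such that $g\mapsto\mu(T^gA\cap B)$ is continuous for all $A,B\in\Sigma$. $\mathrm d_{\mathcal G}(T,S)=\sum_i 2^{-i}\sup_{g\in K_i}\mathrm d(T^g,S^g)$. Let $\Gamma\subset\mathcal G$ be an unbounded subset (not contained in any compact set). An action $T$ is $\Gamma$-mixing if for all $A,B\in\Sigma$ and $\varepsilon>0$ there is a compact $C\subset\mathcal G$ with $|\mu(T^gA\cap B)-\mu(A)\mu(B)|<\varepsilon$ for all $g\in\Gamma\setminus C$. $\mathcal M_{\mathcal G,\Gamma}$ is the set of all $\Gamma$-mixing actions with the leash metric $\mathrm m_{\mathcal G,\Gamma}(T,S)=\mathrm d_{\mathcal G}(T,S)+\sup_{g\in\Gamma}\mathrm a(T^g,S^g)$. *)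

theory Defs
  imports "HOL-Analysis.Analysis" "HOL-Probability.Probability"
begin

text \<open>Indices of the families A_i and K_i start at 0 here; the weight 2^{-i} of the
paper (indices starting at 1) becomes (1/2)^(Suc i).\<close>

definition sdiff :: "'a set \<Rightarrow> 'a set \<Rightarrow> 'a set" where
  "sdiff X Y = (X - Y) \<union> (Y - X)"

text \<open>Invertible measure-preserving transformation (a representative of an element of the group A).\<close>
definition inv_mpt :: "'a measure \<Rightarrow> ('a \<Rightarrow> 'a) \<Rightarrow> bool" where
  "inv_mpt M T \<longleftrightarrow> T \<in> measurable M M \<and> bij_betw T (space M) (space M)
     \<and> the_inv_into (space M) T \<in> measurable M M \<and> distr M M T = M"

definition pre :: "'a measure \<Rightarrow> ('a \<Rightarrow> 'a) \<Rightarrow> 'a set \<Rightarrow> 'a set" where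
  "pre M T X = T -` X \<inter> space M"

definition dist_d :: "'a measure \<Rightarrow> (nat \<Rightarrow> 'a set) \<Rightarrow> ('a \<Rightarrow> 'a) \<Rightarrow> ('a \<Rightarrow> 'a) \<Rightarrow> real" where
  "dist_d M A T S = (\<Sum>i. (1/2)^(Suc i) *
      (measure M (sdiff (T ` A i) (S ` A i)) + measure M (sdiff (pre M T (A i)) (pre M S (A i)))))"

definition dist_a :: "'a measure \<Rightarrow> (nat \<Rightarrow> 'a set) \<Rightarrow> ('a \<Rightarrow> 'a) \<Rightarrow> ('a \<Rightarrow> 'a) \<Rightarrow> real" where
  "dist_a M A T S = (\<Sum>i. \<Sum>j. (1/2)^(Suc i + Suc j) *
      \<bar>measure M (T ` A i \<inter> A j) - measure M (S ` A i \<inter> A j)\<bar>)"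

text \<open>a_k: indices i, j \<le> k in the paper's 1-based indexing, i.e. i, j < k here.\<close>
definition dist_ak :: "'a measure \<Rightarrow> (nat \<Rightarrow> 'a set) \<Rightarrow> nat \<Rightarrow> ('a \<Rightarrow> 'a) \<Rightarrow> ('a \<Rightarrow> 'a) \<Rightarrow> real" where
  "dist_ak M A k T S = (\<Sum>i<k. \<Sum>j<k. (1/2)^(Suc i + Suc j) *
      \<bar>measure M (T ` A i \<inter> A j) - measure M (S ` A i \<inter> A j)\<bar>)"

inductive_set gen_subgroup :: "'g::group_add set \<Rightarrow> 'g set" for X where
  gen_base: "x \<in> X \<Longrightarrow> x \<in> gen_subgroup X"
| gen_zero: "0 \<in> gen_subgroup X"
| gen_add: "x \<in> gen_subgroup X \<Longrightarrow> y \<in> gen_subgroup X \<Longrightarrow> x + y \<in> gen_subgroup X"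
| gen_uminus: "x \<in> gen_subgroup X \<Longrightarrow> - x \<in> gen_subgroup X"

text \<open>Measure-preserving action of the group (written additively, not assumed commutative).\<close>
definition is_action :: "'a measure \<Rightarrow> ('g::{topological_space,group_add} \<Rightarrow> 'a \<Rightarrow> 'a) \<Rightarrow> bool" where
  "is_action M T \<longleftrightarrow> (\<forall>g. inv_mpt M (T g))
     \<and> (\<forall>g h. AE x in M. T (g + h) x = T g (T h x))
     \<and> (\<forall>A\<in>sets M. \<forall>B\<in>sets M. continuous_on UNIV (\<lambda>g. measure M (T g ` A \<inter> B)))"

definition mixing :: "'a measure \<Rightarrow> 'g::{topological_space,group_add} set \<Rightarrow> ('g \<Rightarrow> 'a \<Rightarrow> 'a) \<Rightarrow> bool" where
  "mixing M \<Gamma> T \<longleftrightarrow> (\<forall>A\<in>sets M. \<forall>B\<in>sets M. \<forall>\<epsilon>>0. \<exists>C. compact C \<and>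
      (\<forall>g\<in>\<Gamma> - C. \<bar>measure M (T g ` A \<inter> B) - measure M A * measure M B\<bar> < \<epsilon>))"

definition Mix :: "'a measure \<Rightarrow> 'g::{topological_space,group_add} set \<Rightarrow> ('g \<Rightarrow> 'a \<Rightarrow> 'a) set" where
  "Mix M \<Gamma> = {T. is_action M T \<and> mixing M \<Gamma> T}"

text \<open>d_G; J is the index set of the (at most countable) family K.\<close>
definition dist_G :: "'a measure \<Rightarrow> (nat \<Rightarrow> 'a set) \<Rightarrow> (nat \<Rightarrow> 'g set) \<Rightarrow> nat set
     \<Rightarrow> ('g \<Rightarrow> 'a \<Rightarrow> 'a) \<Rightarrow> ('g \<Rightarrow> 'a \<Rightarrow> 'a) \<Rightarrow> real" where
  "dist_G M A K J T S = (\<Sum>i. if i \<in> J then (1/2)^(Suc i) * (SUP g\<in>K i. dist_d M A (T g) (S g)) else 0)"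

definition leash :: "'a measure \<Rightarrow> (nat \<Rightarrow> 'a set) \<Rightarrow> (nat \<Rightarrow> 'g set) \<Rightarrow> nat set \<Rightarrow> 'g set
     \<Rightarrow> ('g \<Rightarrow> 'a \<Rightarrow> 'a) \<Rightarrow> ('g \<Rightarrow> 'a \<Rightarrow> 'a) \<Rightarrow> real" where
  "leash M A K J \<Gamma> T S = dist_G M A K J T S + (SUP g\<in>\<Gamma>. dist_a M A (T g) (S g))"

text \<open>s^(n,k); \<open>\<Union>_{i\<le>n} K_i\<close> (1-based) is the union over i \<in> J with i < n (0-based).\<close>
definition dist_s :: "'a measure \<Rightarrow> (nat \<Rightarrow> 'a set) \<Rightarrow> (nat \<Rightarrow> 'g set) \<Rightarrow> nat set \<Rightarrow> 'g set
     \<Rightarrow> nat \<Rightarrow> nat \<Rightarrow> ('g \<Rightarrow> 'a \<Rightarrow> 'a) \<Rightarrow> ('g \<Rightarrow> 'a \<Rightarrow> 'a) \<Rightarrow> real" where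
  "dist_s M A K J \<Gamma> n k T S =
     (SUP g\<in>\<Gamma> \<union> (\<Union>i\<in>{i\<in>J. i < n}. K i). dist_ak M A k (T g) (S g))"

definition s_ball :: "'a measure \<Rightarrow> (nat \<Rightarrow> 'a set) \<Rightarrow> (nat \<Rightarrow> 'g::{topological_space,group_add} set) \<Rightarrow> nat set \<Rightarrow> 'g set
     \<Rightarrow> nat \<Rightarrow> nat \<Rightarrow> ('g \<Rightarrow> 'a \<Rightarrow> 'a) \<Rightarrow> real \<Rightarrow> ('g \<Rightarrow> 'a \<Rightarrow> 'a) set" where
  "s_ball M A K J \<Gamma> n k T \<epsilon> = {S \<in> Mix M \<Gamma>. dist_s M A K J \<Gamma> n k T S < \<epsilon>}"

definition leash_open :: "'a measure \<Rightarrow> (nat \<Rightarrow> 'a set) \<Rightarrow> (nat \<Rightarrow> 'g::{topological_space,group_add} set) \<Rightarrow> nat set \<Rightarrow> 'g set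
     \<Rightarrow> ('g \<Rightarrow> 'a \<Rightarrow> 'a) set \<Rightarrow> bool" where
  "leash_open M A K J \<Gamma> U \<longleftrightarrow> U \<subseteq> Mix M \<Gamma> \<and>
     (\<forall>T\<in>U. \<exists>r>0. \<forall>S\<in>Mix M \<Gamma>. leash M A K J \<Gamma> T S < r \<longrightarrow> S \<in> U)"

end

theory Submission
  imports Defs
begin


context prob_space begin

lemma meas_le1: "measure M X \<le> 1" by simp

lemma absdiff_le1: "\<bar>measure M X - measure M Y\<bar> \<le> 1"
  using prob_le_1[of X] prob_le_1[of Y] measure_nonneg[of M X] measure_nonneg[of M Y] by linarith

lemma pre_sets: "inv_mpt M T \<Longrightarrow> X \<in> sets M \<Longrightarrow> pre M T X \<in> sets M"
  unfolding inv_mpt_def pre_def by (auto intro: measurable_sets)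

lemma pre_meas: "inv_mpt M T \<Longrightarrow> X \<in> sets M \<Longrightarrow> measure M (pre M T X) = measure M X"
  unfolding inv_mpt_def pre_def by (metis measure_distr)

lemma img_eq_pre: assumes "inv_mpt M T" "X \<subseteq> space M"
  shows "T ` X = pre M (the_inv_into (space M) T) X"
proof -
  have b: "bij_betw T (space M) (space M)" using assms(1) unfolding inv_mpt_def by auto
  have inv: "the_inv_into (space M) T (T x) = x" if "x \<in> space M" for x
    using b that by (meson bij_betw_imp_inj_on the_inv_into_f_f)
  have inv2: "T (the_inv_into (space M) T y) = y" if "y \<in> space M" for y
    using b that by (meson f_the_inv_into_f_bij_betw)
  have ts: "T x \<in> space M" if "x \<in> space M" for x using b that by (auto simp: bij_betw_def)
  show ?thesis unfolding pre_def using assms(2) inv inv2 ts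
    by (auto simp: image_iff) (metis inv2 subsetD)
qed

lemma img_sets: "inv_mpt M T \<Longrightarrow> X \<in> sets M \<Longrightarrow> T ` X \<in> sets M"
  using img_eq_pre[of T X] sets.sets_into_space[of X M]
  unfolding inv_mpt_def pre_def by (auto intro: measurable_sets)

lemma pre_img: assumes "inv_mpt M T" "X \<subseteq> space M" shows "pre M T (T ` X) = X"
proof -
  have b: "bij_betw T (space M) (space M)" using assms(1) unfolding inv_mpt_def by auto
  then show ?thesis using assms(2) unfolding pre_def bij_betw_def inj_on_def by auto
qed

lemma img_meas: "inv_mpt M T \<Longrightarrow> X \<in> sets M \<Longrightarrow> measure M (T ` X) = measure M X"
  using pre_meas[of T "T ` X"] img_sets[of T X] pre_img[of T X] sets.sets_into_space[of X M] by simp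

lemma pre_int_img: assumes "inv_mpt M R" "X \<in> sets M" "Z \<in> sets M"
  shows "measure M (pre M R X \<inter> Z) = measure M (R ` Z \<inter> X)"
proof -
  have b: "bij_betw T (space M) (space M)" if "inv_mpt M T" for T using that unfolding inv_mpt_def by auto
  have sp: "Z \<subseteq> space M" "X \<subseteq> space M" using assms sets.sets_into_space by auto
  have "R ` (pre M R X \<inter> Z) = R ` Z \<inter> X" unfolding pre_def using sp by auto
  moreover have "pre M R X \<inter> Z \<in> sets M" using pre_sets[OF assms(1,2)] assms(3) by auto
  ultimately show ?thesis using img_meas[OF assms(1)] by metis
qed

lemma int_diff_bound: assumes "X \<in> sets M" "Y \<in> sets M" "B \<in> sets M"
  shows "\<bar>measure M (X \<inter> B) - measure M (Y \<inter> B)\<bar> \<le> measure M (sdiff X Y)"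
proof -
  have s1: "X \<inter> B \<subseteq> (Y \<inter> B) \<union> (X - Y)" "Y \<inter> B \<subseteq> (X \<inter> B) \<union> (Y - X)" by blast+
  have "measure M (X \<inter> B) \<le> measure M (Y \<inter> B) + measure M (X - Y)"
    using measure_Un_le[of "Y \<inter> B" M "X - Y"] finite_measure_mono[OF s1(1)] assms by auto
  moreover have "measure M (Y \<inter> B) \<le> measure M (X \<inter> B) + measure M (Y - X)"
    using measure_Un_le[of "X \<inter> B" M "Y - X"] finite_measure_mono[OF s1(2)] assms by auto
  moreover have "measure M (X - Y) \<le> measure M (sdiff X Y)" "measure M (Y - X) \<le> measure M (sdiff X Y)"
    unfolding sdiff_def using assms by (auto intro!: finite_measure_mono)
  ultimately show ?thesis by linarith
qed

lemma sdiff_meas: assumes "X \<in> sets M" "Y \<in> sets M"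
  shows "measure M (sdiff X Y) = measure M X + measure M Y - 2 * measure M (X \<inter> Y)"
proof -
  have "measure M (sdiff X Y) = measure M (X - Y) + measure M (Y - X)"
    unfolding sdiff_def using assms by (subst finite_measure_Union) auto
  also have "\<dots> = measure M X + measure M Y - 2 * measure M (X \<inter> Y)"
    using assms by (simp add: finite_measure_Diff' Int_commute)
  finally show ?thesis .
qed

end



lemma geo_half: "summable (\<lambda>i. (1/2::real)^Suc i)" "(\<Sum>i. (1/2::real)^Suc i) = 1"
proof -
  have g: "summable (\<lambda>i. (1/2::real)^i)" "(\<Sum>i. (1/2::real)^i) = 2"
    using summable_geometric[of "1/2::real"] suminf_geometric[of "1/2::real"] by auto
  show "summable (\<lambda>i. (1/2::real)^Suc i)" using summable_mult[OF g(1), of "1/2"] by simp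
  show "(\<Sum>i. (1/2::real)^Suc i) = 1" using suminf_mult[OF g(1), of "1/2"] g(2) by simp
qed

lemma tail_bound:
  fixes f :: "nat \<Rightarrow> real"
  assumes nn: "\<And>i. 0 \<le> f i" and le: "\<And>i. f i \<le> b * (1/2)^(Suc i)"
  shows "summable f" "suminf f \<le> (\<Sum>i<L. f i) + b * (1/2)^L" "suminf f \<le> b"
proof -
  have sb: "summable (\<lambda>i. b * (1/2::real)^Suc i)" using summable_mult[OF geo_half(1)] by simp
  show sf: "summable f"
    by (rule summable_comparison_test'[OF sb, of 0]) (use nn le in auto)
  have sb2: "summable (\<lambda>i. b * (1/2)^L * (1/2::real)^Suc i)" using summable_mult[OF geo_half(1)] by simp
  have "(\<Sum>i. f (i + L)) \<le> (\<Sum>i. b * (1/2)^L * (1/2::real)^Suc i)"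
  proof (rule suminf_le)
    fix i show "f (i + L) \<le> b * (1/2)^L * (1/2::real)^Suc i"
      using le[of "i+L"] by (simp add: power_add mult_ac)
  qed (use sf summable_ignore_initial_segment sb2 in auto)
  also have "\<dots> = b * (1/2)^L" using suminf_mult[OF geo_half(1), of "b * (1/2)^L"] geo_half(2) by simp
  finally show "suminf f \<le> (\<Sum>i<L. f i) + b * (1/2)^L"
    using suminf_split_initial_segment[OF sf, of L] by linarith
  have "suminf f \<le> (\<Sum>i. b * (1/2::real)^Suc i)" by (rule suminf_le) (use le sf sb in auto)
  then show "suminf f \<le> b" using suminf_mult[OF geo_half(1), of b] geo_half(2) by simp
qed

lemma term_le_suminf:
  fixes f :: "nat \<Rightarrow> real"
  assumes "summable f" "\<And>i. 0 \<le> f i" shows "f i \<le> suminf f"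
  using sum_le_suminf[OF assms(1), of "{i}"] assms(2) by auto

context prob_space begin

lemma dist_ak_term:
  assumes "i < k" "j < k"
  shows "(1/2)^(Suc i + Suc j) * \<bar>measure M (T ` A i \<inter> A j) - measure M (S ` A i \<inter> A j)\<bar> \<le> dist_ak M A k T S"
proof -
  let ?f = "\<lambda>i j. (1/2::real)^(Suc i + Suc j) * \<bar>measure M (T ` A i \<inter> A j) - measure M (S ` A i \<inter> A j)\<bar>"
  have "?f i j \<le> (\<Sum>j<k. ?f i j)" by (rule member_le_sum) (use assms in auto)
  also have "\<dots> \<le> (\<Sum>i<k. \<Sum>j<k. ?f i j)" by (rule member_le_sum[of i "{..<k}" "\<lambda>i. \<Sum>j<k. ?f i j"]) (use assms in \<open>auto intro!: sum_nonneg\<close>)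
  finally show ?thesis unfolding dist_ak_def .
qed

lemma dist_ak_nonneg: "0 \<le> dist_ak M A k T S"
  unfolding dist_ak_def by (auto intro!: sum_nonneg)

lemma dist_a_facts:
  shows "0 \<le> dist_a M A T S" "dist_a M A T S \<le> 1"
    "dist_a M A T S \<le> dist_ak M A k T S + 2 * (1/2)^k"
    "dist_ak M A k T S \<le> dist_a M A T S"
proof -
  define f where "f i j = (1/2::real)^(Suc i + Suc j) * \<bar>measure M (T ` A i \<inter> A j) - measure M (S ` A i \<inter> A j)\<bar>" for i j
  have fnn: "0 \<le> f i j" for i j unfolding f_def by simp
  have fle: "f i j \<le> (1/2)^Suc i * (1/2)^Suc j" for i j
    unfolding f_def using absdiff_le1[of "T ` A i \<inter> A j" "S ` A i \<inter> A j"]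
    by (simp add: power_add mult_left_le)
  have inner1: "summable (f i)" for i using tail_bound(1)[of "f i" "(1/2)^Suc i", OF fnn fle] .
  have inner2: "suminf (f i) \<le> (\<Sum>j<L. f i j) + (1/2)^Suc i * (1/2)^L" for i L
    using tail_bound(2)[of "f i" "(1/2)^Suc i", OF fnn fle] .
  have inner3: "suminf (f i) \<le> (1/2)^Suc i" for i using tail_bound(3)[of "f i" "(1/2)^Suc i", OF fnn fle] .
  define g where "g i = (\<Sum>j. f i j)" for i
  have gnn: "0 \<le> g i" for i unfolding g_def using inner1 fnn by (auto intro!: suminf_nonneg)
  have gle: "g i \<le> 1 * (1/2)^Suc i" for i unfolding g_def using inner3 by simp
  note outer = tail_bound[of g 1, OF gnn gle]
  have da: "dist_a M A T S = suminf g" unfolding dist_a_def g_def f_def ..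
  have dak: "dist_ak M A k T S = (\<Sum>i<k. \<Sum>j<k. f i j)" unfolding dist_ak_def f_def ..
  show "0 \<le> dist_a M A T S" unfolding da using outer(1) gnn by (auto intro!: suminf_nonneg)
  show "dist_a M A T S \<le> 1" unfolding da using outer(3) by simp
  have "(\<Sum>i<k. \<Sum>j<k. f i j) \<le> (\<Sum>i<k. g i)"
    by (rule sum_mono) (unfold g_def, rule sum_le_suminf, use inner1 fnn in auto)
  also have "\<dots> \<le> suminf g" by (rule sum_le_suminf) (use outer(1) gnn in auto)
  finally show "dist_ak M A k T S \<le> dist_a M A T S" unfolding da dak .
  have "(\<Sum>i<k. g i) \<le> (\<Sum>i<k. (\<Sum>j<k. f i j) + (1/2)^Suc i * (1/2)^k)"
    by (rule sum_mono) (unfold g_def, rule inner2)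
  also have "\<dots> = (\<Sum>i<k. \<Sum>j<k. f i j) + (\<Sum>i<k. (1/2::real)^Suc i) * (1/2)^k"
    by (simp add: sum.distrib sum_distrib_right)
  also have "\<dots> \<le> (\<Sum>i<k. \<Sum>j<k. f i j) + 1 * (1/2)^k"
  proof -
    have "(\<Sum>i<k. (1/2::real)^Suc i) \<le> (\<Sum>i. (1/2::real)^Suc i)"
      by (rule sum_le_suminf) (use geo_half in auto)
    then show ?thesis using geo_half(2) by (simp add: mult_right_mono)
  qed
  finally have "(\<Sum>i<k. g i) \<le> (\<Sum>i<k. \<Sum>j<k. f i j) + (1/2)^k" by simp
  then show "dist_a M A T S \<le> dist_ak M A k T S + 2 * (1/2)^k"
    unfolding da dak using outer(2)[of k] by simp
qed

lemma dist_d_facts: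
  fixes T S :: "'a \<Rightarrow> 'a" and A :: "nat \<Rightarrow> 'a set"
  defines "e \<equiv> \<lambda>m. (1/2::real)^(Suc m) * (measure M (sdiff (T ` A m) (S ` A m)) + measure M (sdiff (pre M T (A m)) (pre M S (A m))))"
  shows "0 \<le> dist_d M A T S" "dist_d M A T S \<le> 2" "e m \<le> dist_d M A T S"
    "dist_d M A T S \<le> (\<Sum>m<L. e m) + 2 * (1/2)^L"
proof -
  have enn: "0 \<le> e m" for m unfolding e_def by simp
  have ele: "e m \<le> 2 * (1/2)^Suc m" for m
  proof -
    have "measure M (sdiff (T ` A m) (S ` A m)) + measure M (sdiff (pre M T (A m)) (pre M S (A m))) \<le> 2"
      using prob_le_1 by (smt (verit))
    then show ?thesis unfolding e_def by (simp add: mult_left_le mult.commute)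
  qed
  note tb = tail_bound[of e 2, OF enn ele]
  have dd: "dist_d M A T S = suminf e" unfolding dist_d_def e_def ..
  show "0 \<le> dist_d M A T S" unfolding dd using tb(1) enn by (auto intro!: suminf_nonneg)
  show "dist_d M A T S \<le> 2" unfolding dd using tb(3) .
  show "e m \<le> dist_d M A T S" unfolding dd using term_le_suminf[OF tb(1) enn] .
  show "dist_d M A T S \<le> (\<Sum>m<L. e m) + 2 * (1/2)^L" unfolding dd using tb(2) .
qed

end



context prob_space begin

lemma sub_le2: assumes "S \<subseteq> P \<union> Q" "P \<in> sets M" "Q \<in> sets M"
  shows "measure M S \<le> measure M P + measure M Q"
proof -
  have "measure M S \<le> measure M (P \<union> Q)"
  proof (cases "S \<in> sets M")
    case True then show ?thesis using assms by (intro finite_measure_mono) auto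
  next
    case False then show ?thesis by (simp add: measure_notin_sets)
  qed
  also have "\<dots> \<le> measure M P + measure M Q" using measure_Un_le assms by auto
  finally show ?thesis .
qed

lemma core:
  fixes X :: "'g::topological_space \<Rightarrow> 'a set" and C :: "'g set" and c \<delta> :: real
    and A :: "nat \<Rightarrow> 'a set"
  assumes Xs: "\<And>g. X g \<in> sets M" and Xc: "\<And>g. measure M (X g) = c"
    and cont: "\<And>g0. continuous_on UNIV (\<lambda>g. measure M (X g \<inter> X g0))"
    and C: "compact C" and As: "\<And>i. A i \<in> sets M"
    and dense: "\<forall>Z\<in>sets M. \<forall>e>0. \<exists>i. measure M (sdiff (A i) Z) < e"
    and \<delta>: "\<delta> > 0"
  shows "\<exists>k. \<forall>g\<in>C. \<forall>Y\<in>sets M. measure M Y = c \<longrightarrow>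
     (\<forall>j<k. \<bar>measure M (Y \<inter> A j) - measure M (X g \<inter> A j)\<bar> < \<delta>) \<longrightarrow>
     measure M (sdiff (X g) Y) < 6 * \<delta>"
proof -
  have "\<forall>g0. \<exists>i. measure M (sdiff (A i) (X g0)) < \<delta>" using dense Xs \<delta> by blast
  then obtain jf where jf: "\<And>g0. measure M (sdiff (A (jf g0)) (X g0)) < \<delta>" by metis
  define V where "V g0 = {g. c - \<delta>/2 < measure M (X g \<inter> X g0)}" for g0
  have opn: "open (V g0)" for g0 unfolding V_def
    by (rule open_Collect_less) (use cont in auto)
  have "g0 \<in> V g0" for g0 unfolding V_def using Xc[of g0] \<delta> by simp
  then have cov: "C \<subseteq> (\<Union>g0\<in>C. V g0)" by auto
  obtain D where D: "D \<subseteq> C" "finite D" "C \<subseteq> (\<Union>g0\<in>D. V g0)"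
    using compactE_image[OF C opn cov] by metis
  define k where "k = Suc (\<Sum>g0\<in>D. jf g0)"
  have jk: "jf g0 < k" if "g0 \<in> D" for g0
    unfolding k_def using member_le_sum[of g0 D jf] that D(2) by simp
  show ?thesis
  proof (intro exI[of _ k] ballI impI)
    fix g Y assume g: "g \<in> C" and Y: "Y \<in> sets M" and Yc: "measure M Y = c"
      and cl: "\<forall>j<k. \<bar>measure M (Y \<inter> A j) - measure M (X g \<inter> A j)\<bar> < \<delta>"
    obtain g0 where g0: "g0 \<in> D" "g \<in> V g0" using D(3) g by auto
    define j where "j = jf g0"
    have c1: "\<bar>measure M (Y \<inter> A j) - measure M (X g \<inter> A j)\<bar> < \<delta>" using cl jk[OF g0(1)] j_def by auto
    have c2: "c - \<delta>/2 < measure M (X g \<inter> X g0)" using g0(2) V_def by auto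
    have a: "measure M (Y \<inter> A j) \<le> measure M (X g \<inter> Y) + measure M (A j - X g)"
      by (rule sub_le2) (use Xs Y As in auto)
    have b: "measure M (X g \<inter> X g0) \<le> measure M (X g \<inter> A j) + measure M (X g0 - A j)"
      by (rule sub_le2) (use Xs Y As in auto)
    have cc: "measure M (A j - X g) \<le> measure M (A j - X g0) + measure M (X g0 - X g)"
      by (rule sub_le2) (use Xs Y As in auto)
    have d: "measure M (X g0 - X g) = c - measure M (X g \<inter> X g0)"
      using finite_measure_Diff'[of "X g0" "X g"] Xs Xc by (simp add: Int_commute)
    have e: "measure M (A j - X g0) + measure M (X g0 - A j) < \<delta>"
    proof -
      have "measure M (sdiff (A j) (X g0)) = measure M (A j - X g0) + measure M (X g0 - A j)"
        unfolding sdiff_def using Xs As by (subst finite_measure_Union) auto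
      then show ?thesis using jf[of g0] j_def by simp
    qed
    have f: "measure M (sdiff (X g) Y) = c + c - 2 * measure M (X g \<inter> Y)"
      using sdiff_meas[of "X g" Y] Xs Y Xc Yc by simp
    show "measure M (sdiff (X g) Y) < 6 * \<delta>"
      using a b cc d e f c1 c2 by linarith
  qed
qed

end



context prob_space begin

lemma dist_ak_triangle:
  "dist_ak M A k T S' \<le> dist_ak M A k T S + dist_ak M A k S S'"
  unfolding dist_ak_def sum.distrib[symmetric]
proof (intro sum_mono)
  fix i j
  show "(1/2)^(Suc i + Suc j) * \<bar>measure M (T ` A i \<inter> A j) - measure M (S' ` A i \<inter> A j)\<bar>
    \<le> (1/2)^(Suc i + Suc j) * \<bar>measure M (T ` A i \<inter> A j) - measure M (S ` A i \<inter> A j)\<bar> +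
       (1/2)^(Suc i + Suc j) * \<bar>measure M (S ` A i \<inter> A j) - measure M (S' ` A i \<inter> A j)\<bar>"
    unfolding distrib_left[symmetric] by (rule mult_left_mono) auto
qed

lemma dist_ak_le1: "dist_ak M A k T S \<le> 1"
  by (meson dist_a_facts(2) dist_a_facts(4) order_trans)

lemma ak_le_d:
  assumes R: "inv_mpt M R" and Q: "inv_mpt M Q" and As: "\<And>i. A i \<in> sets M"
  shows "dist_ak M A k R Q \<le> real k * (real k * (2^k * dist_d M A R Q))"
proof -
  have t: "(1/2)^(Suc i + Suc j) * \<bar>measure M (R ` A i \<inter> A j) - measure M (Q ` A i \<inter> A j)\<bar>
      \<le> 2^k * dist_d M A R Q" if "i < k" for i j
  proof -
    have dd: "0 \<le> dist_d M A R Q" using dist_d_facts(1) .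
    have "(1/2)^(Suc i + Suc j) * \<bar>measure M (R ` A i \<inter> A j) - measure M (Q ` A i \<inter> A j)\<bar>
       \<le> \<bar>measure M (R ` A i \<inter> A j) - measure M (Q ` A i \<inter> A j)\<bar>"
      by (rule mult_left_le_one_le) (rule abs_ge_zero, rule zero_le_power, simp, rule power_le_one, simp_all)
    also have "\<dots> \<le> measure M (sdiff (R ` A i) (Q ` A i))"
      by (rule int_diff_bound) (use img_sets[OF R] img_sets[OF Q] As in auto)
    also have "\<dots> \<le> 2^Suc i * dist_d M A R Q"
    proof -
      have "(1/2::real)^(Suc i) * (measure M (sdiff (R ` A i) (Q ` A i)) + measure M (sdiff (pre M R (A i)) (pre M Q (A i)))) \<le> dist_d M A R Q"
        by (rule dist_d_facts(3))
      then have "(1/2::real)^(Suc i) * measure M (sdiff (R ` A i) (Q ` A i)) \<le> dist_d M A R Q"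
        by (smt (verit, ccfv_SIG) distrib_left measure_nonneg zero_le_power zero_le_divide_1_iff mult_nonneg_nonneg)
      then have "2^Suc i * ((1/2::real)^(Suc i) * measure M (sdiff (R ` A i) (Q ` A i))) \<le> 2^Suc i * dist_d M A R Q"
        by (rule mult_left_mono) simp
      then show ?thesis by (simp add: power_one_over mult.assoc[symmetric])
    qed
    also have "\<dots> \<le> 2^k * dist_d M A R Q"
      by (rule mult_right_mono[OF _ dd]) (use that power_increasing[of "Suc i" k "2::real"] in auto)
    finally show ?thesis .
  qed
  have "dist_ak M A k R Q \<le> (\<Sum>i<k. real k * (2^k * dist_d M A R Q))"
    unfolding dist_ak_def
    by (rule sum_mono, rule order_trans[OF sum_bounded_above[where K="2^k * dist_d M A R Q"]]) (use t in auto)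
  also have "\<dots> = real k * (real k * (2^k * dist_d M A R Q))" by simp
  finally show ?thesis .
qed

end



context prob_space begin

lemma dist_G_facts:
  fixes K :: "nat \<Rightarrow> 'g set"
  assumes Kne: "\<forall>i\<in>J. K i \<noteq> {}"
  shows "0 \<le> dist_G M A K J T S"
    "i \<in> J \<Longrightarrow> g \<in> K i \<Longrightarrow> (1/2)^Suc i * dist_d M A (T g) (S g) \<le> dist_G M A K J T S"
    "(\<And>i g. i \<in> J \<Longrightarrow> i < n \<Longrightarrow> g \<in> K i \<Longrightarrow> dist_d M A (T g) (S g) \<le> \<delta>) \<Longrightarrow> 0 \<le> \<delta>
      \<Longrightarrow> dist_G M A K J T S \<le> \<delta> + 2*(1/2)^n"
proof -
  define t where "t i = (if i \<in> J then (1/2::real)^(Suc i) * (SUP g\<in>K i. dist_d M A (T g) (S g)) else 0)" for i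
  have bdd: "bdd_above ((\<lambda>g. dist_d M A (T g) (S g)) ` K i)" for i
    using dist_d_facts(2) by (auto intro!: bdd_aboveI)
  have sup_ge: "dist_d M A (T g) (S g) \<le> (SUP g\<in>K i. dist_d M A (T g) (S g))" if "g \<in> K i" for i g
    by (rule cSUP_upper[OF that bdd])
  have sup_nn: "0 \<le> (SUP g\<in>K i. dist_d M A (T g) (S g))" if iJ: "i \<in> J" for i
  proof -
    obtain g where "g \<in> K i" using Kne iJ by auto
    then show ?thesis using sup_ge[of g i] dist_d_facts(1)[of A "T g" "S g"] by linarith
  qed
  have sup_le: "(SUP g\<in>K i. dist_d M A (T g) (S g)) \<le> b" if "i \<in> J" "\<And>g. g \<in> K i \<Longrightarrow> dist_d M A (T g) (S g) \<le> b" for i b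
    by (rule cSUP_least) (use Kne that in auto)
  have tnn: "0 \<le> t i" for i unfolding t_def using sup_nn by auto
  have tle: "t i \<le> 2 * (1/2)^Suc i" for i
    unfolding t_def using sup_le[of i 2] dist_d_facts(2) by (auto simp: mult.commute intro: mult_right_mono)
  note tb = tail_bound[of t 2, OF tnn tle]
  have dG: "dist_G M A K J T S = suminf t" unfolding dist_G_def t_def ..
  show "0 \<le> dist_G M A K J T S" unfolding dG using tb(1) tnn by (auto intro!: suminf_nonneg)
  show "i \<in> J \<Longrightarrow> g \<in> K i \<Longrightarrow> (1/2)^Suc i * dist_d M A (T g) (S g) \<le> dist_G M A K J T S"
  proof -
    assume i: "i \<in> J" and g: "g \<in> K i"
    have "(1/2)^Suc i * dist_d M A (T g) (S g) \<le> t i" unfolding t_def using i sup_ge[OF g]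
      by (auto intro: mult_left_mono)
    also have "\<dots> \<le> dist_G M A K J T S" unfolding dG by (rule term_le_suminf[OF tb(1) tnn])
    finally show ?thesis .
  qed
  assume H: "\<And>i g. i \<in> J \<Longrightarrow> i < n \<Longrightarrow> g \<in> K i \<Longrightarrow> dist_d M A (T g) (S g) \<le> \<delta>" and d0: "0 \<le> \<delta>"
  have "t i \<le> (1/2)^Suc i * \<delta>" if "i < n" for i
    unfolding t_def using sup_le[of i \<delta>] H that d0 by (auto intro: mult_left_mono)
  then have "(\<Sum>i<n. t i) \<le> (\<Sum>i<n. (1/2)^Suc i * \<delta>)" by (intro sum_mono) auto
  also have "\<dots> = (\<Sum>i<n. (1/2::real)^Suc i) * \<delta>" by (simp add: sum_distrib_right)
  also have "\<dots> \<le> 1 * \<delta>"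
  proof -
    have "(\<Sum>i<n. (1/2::real)^Suc i) \<le> (\<Sum>i. (1/2::real)^Suc i)"
      by (rule sum_le_suminf) (use geo_half in auto)
    then show ?thesis using geo_half(2) d0 by (intro mult_right_mono) auto
  qed
  finally show "dist_G M A K J T S \<le> \<delta> + 2*(1/2)^n" unfolding dG using tb(2)[of n] by simp
qed

lemma leash_facts:
  fixes K :: "nat \<Rightarrow> 'g set"
  assumes Kne: "\<forall>i\<in>J. K i \<noteq> {}" and Gne: "\<Gamma> \<noteq> {}"
  shows "dist_G M A K J T S \<le> leash M A K J \<Gamma> T S"
    "g \<in> \<Gamma> \<Longrightarrow> dist_a M A (T g) (S g) \<le> leash M A K J \<Gamma> T S"
    "0 \<le> leash M A K J \<Gamma> T S"
    "(\<And>g. g \<in> \<Gamma> \<Longrightarrow> dist_a M A (T g) (S g) \<le> b) \<Longrightarrow> leash M A K J \<Gamma> T S \<le> dist_G M A K J T S + b"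
proof -
  have bdd: "bdd_above ((\<lambda>g. dist_a M A (T g) (S g)) ` \<Gamma>)"
    using dist_a_facts(2) by (auto intro!: bdd_aboveI)
  obtain g0 where g0: "g0 \<in> \<Gamma>" using Gne by auto
  have s0: "0 \<le> (SUP g\<in>\<Gamma>. dist_a M A (T g) (S g))"
    using cSUP_upper[OF g0 bdd] dist_a_facts(1)[of A "T g0" "S g0"] by linarith
  note G0 = dist_G_facts(1)[OF Kne, of A T S]
  show "dist_G M A K J T S \<le> leash M A K J \<Gamma> T S" unfolding leash_def using s0 by simp
  show "0 \<le> leash M A K J \<Gamma> T S" unfolding leash_def using s0 G0 by simp
  show "g \<in> \<Gamma> \<Longrightarrow> dist_a M A (T g) (S g) \<le> leash M A K J \<Gamma> T S"
    unfolding leash_def using cSUP_upper[OF _ bdd, of g] G0 by simp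
  show "(\<And>g. g \<in> \<Gamma> \<Longrightarrow> dist_a M A (T g) (S g) \<le> b) \<Longrightarrow> leash M A K J \<Gamma> T S \<le> dist_G M A K J T S + b"
    unfolding leash_def using cSUP_least[OF Gne, of "\<lambda>g. dist_a M A (T g) (S g)" b] by simp
qed

end



lemma Mix_inv: "S \<in> Mix M \<Gamma> \<Longrightarrow> inv_mpt M (S g)"
  unfolding Mix_def is_action_def by auto

context prob_space begin

lemma part1:
  fixes K :: "nat \<Rightarrow> 'g::{topological_space,group_add} set"
  assumes As: "\<And>i. A i \<in> sets M" and Kne: "\<forall>i\<in>J. K i \<noteq> {}" and Gne: "\<Gamma> \<noteq> {}"
  shows "leash_open M A K J \<Gamma> (s_ball M A K J \<Gamma> n k T \<epsilon>)"
  unfolding leash_open_def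
proof (intro conjI ballI)
  show "s_ball M A K J \<Gamma> n k T \<epsilon> \<subseteq> Mix M \<Gamma>" unfolding s_ball_def by auto
  fix S assume S: "S \<in> s_ball M A K J \<Gamma> n k T \<epsilon>"
  define I where "I = \<Gamma> \<union> (\<Union>i\<in>{i\<in>J. i<n}. K i)"
  have Ine: "I \<noteq> {}" unfolding I_def using Gne by auto
  have bdd: "bdd_above ((\<lambda>g. dist_ak M A k (X g) (Y g)) ` I)" for X Y :: "'g \<Rightarrow> 'a \<Rightarrow> 'a"
    using dist_ak_le1 by (auto intro!: bdd_aboveI)
  have dsI: "dist_s M A K J \<Gamma> n k X Y = (SUP g\<in>I. dist_ak M A k (X g) (Y g))" for X Y
    unfolding dist_s_def I_def ..
  define ds where "ds = dist_s M A K J \<Gamma> n k T S"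
  have SM: "S \<in> Mix M \<Gamma>" and dse: "ds < \<epsilon>" using S unfolding s_ball_def ds_def by auto
  define Cst where "Cst = real k * (real k * 2^k) * 2^n + (1::real)"
  have Cst1: "1 \<le> Cst" unfolding Cst_def by simp
  show "\<exists>r>0. \<forall>S'\<in>Mix M \<Gamma>. leash M A K J \<Gamma> S S' < r \<longrightarrow> S' \<in> s_ball M A K J \<Gamma> n k T \<epsilon>"
  proof (intro exI[of _ "(\<epsilon> - ds) / Cst"] conjI ballI impI)
    show "0 < (\<epsilon> - ds) / Cst" using dse Cst1 by simp
    fix S' assume S'M: "S' \<in> Mix M \<Gamma>" and lS: "leash M A K J \<Gamma> S S' < (\<epsilon> - ds) / Cst"
    define l where "l = leash M A K J \<Gamma> S S'"
    have l0: "0 \<le> l" unfolding l_def by (rule leash_facts(3)[OF Kne Gne])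
    have key: "dist_ak M A k (S g) (S' g) \<le> Cst * l" if g: "g \<in> I" for g
    proof (cases "g \<in> \<Gamma>")
      case True
      have "dist_ak M A k (S g) (S' g) \<le> dist_a M A (S g) (S' g)" by (rule dist_a_facts(4))
      also have "\<dots> \<le> l" unfolding l_def by (rule leash_facts(2)[OF Kne Gne True])
      also have "\<dots> \<le> Cst * l" using Cst1 l0 by (simp add: mult_le_cancel_right1)
      finally show ?thesis .
    next
      case False
      then obtain i where i: "i \<in> J" "i < n" "g \<in> K i" using g unfolding I_def by auto
      have "dist_ak M A k (S g) (S' g) \<le> real k * (real k * (2^k * dist_d M A (S g) (S' g)))"
        by (rule ak_le_d[OF Mix_inv[OF SM] Mix_inv[OF S'M] As])
      also have "dist_d M A (S g) (S' g) \<le> 2^n * l"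
      proof -
        have "(1/2)^Suc i * dist_d M A (S g) (S' g) \<le> dist_G M A K J S S'"
          by (rule dist_G_facts(2)[OF Kne i(1) i(3)])
        also have "\<dots> \<le> l" unfolding l_def by (rule leash_facts(1)[OF Kne Gne])
        finally have "2^Suc i * ((1/2)^Suc i * dist_d M A (S g) (S' g)) \<le> 2^Suc i * l"
          by (intro mult_left_mono) auto
        then have "dist_d M A (S g) (S' g) \<le> 2^Suc i * l" by (simp add: power_one_over mult.assoc[symmetric])
        also have "\<dots> \<le> 2^n * l" using i(2) l0 power_increasing[of "Suc i" n "2::real"] by (intro mult_right_mono) auto
        finally show ?thesis .
      qed
      then have "real k * (real k * (2^k * dist_d M A (S g) (S' g))) \<le> real k * (real k * (2^k * (2^n * l)))"
        by (intro mult_left_mono) auto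
      also have "\<dots> \<le> Cst * l" unfolding Cst_def using l0 by (simp add: algebra_simps)
      finally show ?thesis .
    qed
    have "dist_s M A K J \<Gamma> n k T S' \<le> ds + Cst * l"
      unfolding dsI
    proof (rule cSUP_least[OF Ine])
      fix g assume g: "g \<in> I"
      have "dist_ak M A k (T g) (S g) \<le> ds" unfolding ds_def dsI by (rule cSUP_upper[OF g bdd])
      then show "dist_ak M A k (T g) (S' g) \<le> ds + Cst * l"
        using dist_ak_triangle[of A k "T g" "S' g" "S g"] key[OF g] by linarith
    qed
    also have "Cst * l < \<epsilon> - ds" using lS Cst1 unfolding l_def by (simp add: pos_less_divide_eq mult.commute)
    finally show "S' \<in> s_ball M A K J \<Gamma> n k T \<epsilon>" unfolding s_ball_def using S'M by simp
  qed
qed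

end



context prob_space begin

lemma part2:
  fixes K :: "nat \<Rightarrow> 'g::{topological_space,group_add} set"
  assumes As: "\<And>i. A i \<in> sets M"
    and dense: "\<forall>X\<in>sets M. \<forall>e>0. \<exists>i. measure M (sdiff (A i) X) < e"
    and Kc: "\<forall>i\<in>J. compact (K i)" and Kne: "\<forall>i\<in>J. K i \<noteq> {}" and Gne: "\<Gamma> \<noteq> {}"
    and U: "leash_open M A K J \<Gamma> U" and SU: "S \<in> U"
  shows "\<exists>n\<ge>1. \<exists>k\<ge>1. \<exists>\<epsilon>>0. \<exists>T\<in>Mix M \<Gamma>.
               S \<in> s_ball M A K J \<Gamma> n k T \<epsilon> \<and> s_ball M A K J \<Gamma> n k T \<epsilon> \<subseteq> U"
proof -
  have UM: "U \<subseteq> Mix M \<Gamma>" using U unfolding leash_open_def by auto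
  obtain r where r: "r > 0" and rU: "\<And>S'. S' \<in> Mix M \<Gamma> \<Longrightarrow> leash M A K J \<Gamma> S S' < r \<Longrightarrow> S' \<in> U"
    using U SU unfolding leash_open_def by blast
  have SM: "S \<in> Mix M \<Gamma>" using UM SU by auto
  have act: "is_action M S" using SM unfolding Mix_def by auto
  have inv: "inv_mpt M (S g)" for g using Mix_inv[OF SM] .
  have contS: "continuous_on UNIV (\<lambda>g. measure M (S g ` X \<inter> B))" if "X \<in> sets M" "B \<in> sets M" for X B
    using act that unfolding is_action_def by auto
  obtain N0 where N0: "(1/2::real)^N0 < r/16" using real_arch_pow_inv[of "r/16" "1/2::real"] r by auto
  have tailN: "2 * (1/2::real)^x \<le> r/8" if "N0 \<le> x" for x
  proof -
    have "(1/2::real)^x \<le> (1/2)^N0" by (rule power_decreasing[OF that]) auto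
    then show ?thesis using N0 by linarith
  qed
  define n where "n = Suc N0"
  define L where "L = Suc N0"
  define \<delta> where "\<delta> = r / 96"
  have \<delta>0: "\<delta> > 0" unfolding \<delta>_def using r by simp
  define C where "C = (\<Union>i\<in>{i\<in>J. i<n}. K i)"
  have Cc: "compact C" unfolding C_def using Kc by (intro compact_UN) auto
  have hI: "\<exists>k. \<forall>g\<in>C. \<forall>Y\<in>sets M. measure M Y = measure M (A m) \<longrightarrow>
     (\<forall>j<k. \<bar>measure M (Y \<inter> A j) - measure M (S g ` A m \<inter> A j)\<bar> < \<delta>) \<longrightarrow>
     measure M (sdiff (S g ` A m) Y) < 6 * \<delta>" for m
  proof (rule core[OF _ _ _ Cc As dense \<delta>0])
    show "S g ` A m \<in> sets M" for g using img_sets[OF inv As] .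
    show "measure M (S g ` A m) = measure M (A m)" for g using img_meas[OF inv As] .
    show "continuous_on UNIV (\<lambda>g. measure M (S g ` A m \<inter> S g0 ` A m))" for g0
      by (rule contS) (use img_sets[OF inv As] As in auto)
  qed
  have hP: "\<exists>k. \<forall>g\<in>C. \<forall>Y\<in>sets M. measure M Y = measure M (A m) \<longrightarrow>
     (\<forall>j<k. \<bar>measure M (Y \<inter> A j) - measure M (pre M (S g) (A m) \<inter> A j)\<bar> < \<delta>) \<longrightarrow>
     measure M (sdiff (pre M (S g) (A m)) Y) < 6 * \<delta>" for m
  proof (rule core[OF _ _ _ Cc As dense \<delta>0])
    show "pre M (S g) (A m) \<in> sets M" for g using pre_sets[OF inv As] .
    show "measure M (pre M (S g) (A m)) = measure M (A m)" for g using pre_meas[OF inv As] .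
    show "continuous_on UNIV (\<lambda>g. measure M (pre M (S g) (A m) \<inter> pre M (S g0) (A m)))" for g0
    proof -
      have "continuous_on UNIV (\<lambda>g. measure M (S g ` pre M (S g0) (A m) \<inter> A m))"
        by (rule contS) (use pre_sets[OF inv As] As in auto)
      moreover have "measure M (pre M (S g) (A m) \<inter> pre M (S g0) (A m)) = measure M (S g ` pre M (S g0) (A m) \<inter> A m)" for g
        by (rule pre_int_img[OF inv As pre_sets[OF inv As]])
      ultimately show ?thesis by simp
    qed
  qed
  obtain kI where kI: "\<And>m. \<forall>g\<in>C. \<forall>Y\<in>sets M. measure M Y = measure M (A m) \<longrightarrow>
     (\<forall>j<kI m. \<bar>measure M (Y \<inter> A j) - measure M (S g ` A m \<inter> A j)\<bar> < \<delta>) \<longrightarrow>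
     measure M (sdiff (S g ` A m) Y) < 6 * \<delta>" using hI by metis
  obtain kP where kP: "\<And>m. \<forall>g\<in>C. \<forall>Y\<in>sets M. measure M Y = measure M (A m) \<longrightarrow>
     (\<forall>j<kP m. \<bar>measure M (Y \<inter> A j) - measure M (pre M (S g) (A m) \<inter> A j)\<bar> < \<delta>) \<longrightarrow>
     measure M (sdiff (pre M (S g) (A m)) Y) < 6 * \<delta>" using hP by metis
  define k where "k = Suc (N0 + (\<Sum>m<L. kI m + kP m))"
  have kLe: "kI m \<le> k" "kP m \<le> k" if "m < L" for m
    using member_le_sum[of m "{..<L}" "\<lambda>m. kI m + kP m"] that unfolding k_def by auto
  have Lk: "L \<le> k" "N0 \<le> k" unfolding k_def L_def by auto
  define \<epsilon> where "\<epsilon> = min (r/8) (\<delta> * (1/2)^(2*k))"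
  have \<epsilon>0: "\<epsilon> > 0" unfolding \<epsilon>_def using r \<delta>0 by simp
  define I where "I = \<Gamma> \<union> (\<Union>i\<in>{i\<in>J. i<n}. K i)"
  have Ine: "I \<noteq> {}" unfolding I_def using Gne by auto
  have bdd: "bdd_above ((\<lambda>g. dist_ak M A k (X g) (Y g)) ` I)" for X Y :: "'g \<Rightarrow> 'a \<Rightarrow> 'a"
    using dist_ak_le1 by (auto intro!: bdd_aboveI)
  have dsI: "dist_s M A K J \<Gamma> n k X Y = (SUP g\<in>I. dist_ak M A k (X g) (Y g))" for X Y
    unfolding dist_s_def I_def ..
  have "dist_s M A K J \<Gamma> n k S S = 0"
  proof -
    have "dist_ak M A k (S g) (S g) = 0" for g unfolding dist_ak_def by simp
    then show ?thesis unfolding dsI using Ine by simp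
  qed
  then have Sin: "S \<in> s_ball M A K J \<Gamma> n k S \<epsilon>" unfolding s_ball_def using SM \<epsilon>0 by simp
  have sub: "s_ball M A K J \<Gamma> n k S \<epsilon> \<subseteq> U"
  proof
    fix S' assume S': "S' \<in> s_ball M A K J \<Gamma> n k S \<epsilon>"
    have S'M: "S' \<in> Mix M \<Gamma>" and dss: "dist_s M A K J \<Gamma> n k S S' < \<epsilon>" using S' unfolding s_ball_def by auto
    have inv': "inv_mpt M (S' g)" for g using Mix_inv[OF S'M] .
    have akb: "dist_ak M A k (S g) (S' g) < \<epsilon>" if "g \<in> I" for g
      using cSUP_upper[OF that bdd, of S S'] dss unfolding dsI by linarith
    have termb: "\<bar>measure M (S g ` A a \<inter> A b) - measure M (S' g ` A a \<inter> A b)\<bar> < \<delta>"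
      if g: "g \<in> I" and ab: "a < k" "b < k" for g a b
    proof -
      define x where "x = \<bar>measure M (S g ` A a \<inter> A b) - measure M (S' g ` A a \<inter> A b)\<bar>"
      have "(1/2)^(Suc a + Suc b) * x \<le> dist_ak M A k (S g) (S' g)"
        unfolding x_def by (rule dist_ak_term[OF ab])
      also have "\<dots> < \<delta> * (1/2)^(2*k)" using akb[OF g] unfolding \<epsilon>_def by linarith
      also have "\<dots> \<le> \<delta> * (1/2)^(Suc a + Suc b)"
        using ab \<delta>0 by (intro mult_left_mono power_decreasing) auto
      finally show ?thesis unfolding x_def by (simp add: mult.commute)
    qed
    have Kpart: "dist_d M A (S g) (S' g) \<le> r/4" if i: "i \<in> J" "i < n" "g \<in> K i" for i g
    proof -
      have gC: "g \<in> C" and gI: "g \<in> I" unfolding C_def I_def using i by auto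
      have em: "measure M (sdiff (S g ` A m) (S' g ` A m)) + measure M (sdiff (pre M (S g) (A m)) (pre M (S' g) (A m)))
          \<le> r / 8" if m: "m < L" for m
      proof -
        have mk: "m < k" using m Lk by auto
        have c1: "\<forall>j<kI m. \<bar>measure M (S' g ` A m \<inter> A j) - measure M (S g ` A m \<inter> A j)\<bar> < \<delta>"
            using termb[OF gI mk] kLe(1)[OF m] by (auto simp: abs_minus_commute)
        have h1: "measure M (sdiff (S g ` A m) (S' g ` A m)) < 6 * \<delta>"
          using kI[of m] gC img_sets[OF inv' As] img_meas[OF inv' As] c1 by blast
        have c2: "\<forall>j<kP m. \<bar>measure M (pre M (S' g) (A m) \<inter> A j) - measure M (pre M (S g) (A m) \<inter> A j)\<bar> < \<delta>"
          proof (intro allI impI)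
            fix j assume j: "j < kP m"
            then have jk: "j < k" using kLe(2)[OF m] by auto
            show "\<bar>measure M (pre M (S' g) (A m) \<inter> A j) - measure M (pre M (S g) (A m) \<inter> A j)\<bar> < \<delta>"
              using termb[OF gI jk mk] pre_int_img[OF inv' As As, of g m j] pre_int_img[OF inv As As, of g m j]
              by (simp add: abs_minus_commute)
          qed
        moreover have "measure M (sdiff (pre M (S g) (A m)) (pre M (S' g) (A m))) < 6 * \<delta>"
          using kP[of m] gC pre_sets[OF inv' As] pre_meas[OF inv' As] c2 by blast
        ultimately show ?thesis using h1 unfolding \<delta>_def by simp
      qed
      define e where "e m = (1/2::real)^(Suc m) * (measure M (sdiff (S g ` A m) (S' g ` A m)) + measure M (sdiff (pre M (S g) (A m)) (pre M (S' g) (A m))))" for m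
      have "dist_d M A (S g) (S' g) \<le> (\<Sum>m<L. e m) + 2 * (1/2)^L" unfolding e_def by (rule dist_d_facts(4))
      also have "(\<Sum>m<L. e m) \<le> (\<Sum>m<L. (1/2::real)^Suc m * (r/8))"
        unfolding e_def by (intro sum_mono mult_left_mono em) auto
      also have "\<dots> = (\<Sum>m<L. (1/2::real)^Suc m) * (r/8)" by (rule sum_distrib_right[symmetric])
      also have "\<dots> \<le> 1 * (r/8)"
      proof -
        have "(\<Sum>m<L. (1/2::real)^Suc m) \<le> (\<Sum>i. (1/2::real)^Suc i)"
          by (rule sum_le_suminf) (use geo_half in auto)
        then show ?thesis using geo_half(2) r by (intro mult_right_mono) auto
      qed
      finally show ?thesis using tailN[of L] unfolding L_def by simp
    qed
    have dG: "dist_G M A K J S S' \<le> r/4 + 2*(1/2)^n"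
      by (rule dist_G_facts(3)[OF Kne]) (use Kpart r in auto)
    have Gpart: "dist_a M A (S g) (S' g) \<le> r/4" if g: "g \<in> \<Gamma>" for g
    proof -
      have "g \<in> I" unfolding I_def using g by auto
      then have "dist_ak M A k (S g) (S' g) < r/8" using akb unfolding \<epsilon>_def by fastforce
      then show ?thesis using dist_a_facts(3)[of A "S g" "S' g" k] tailN[OF Lk(2)] by linarith
    qed
    have "leash M A K J \<Gamma> S S' \<le> dist_G M A K J S S' + r/4"
      by (rule leash_facts(4)[OF Kne Gne]) (use Gpart in auto)
    also have "\<dots> < r" using dG tailN[of n] r unfolding n_def by simp
    finally show "S' \<in> U" using rU[OF S'M] by simp
  qed
  show ?thesis
    by (intro exI[of _ n] exI[of _ k] exI[of _ \<epsilon>] conjI bexI[of _ S]) (use Sin sub SM \<epsilon>0 in \<open>auto simp: n_def k_def\<close>)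
qed

end


theorem mainTheorem10:
  fixes M :: "'a measure"
    and A :: "nat \<Rightarrow> 'a set"
    and K :: "nat \<Rightarrow> 'g::{topological_group_add, t2_space, first_countable_topology} set"
    and J :: "nat set"
    and \<Gamma> :: "'g set"
  assumes "prob_space M"
    and nonatomic: "\<forall>X\<in>sets M. measure M X > 0 \<longrightarrow>
                (\<exists>Y\<in>sets M. Y \<subseteq> X \<and> 0 < measure M Y \<and> measure M Y < measure M X)"
    and A_sets: "\<forall>i. A i \<in> sets M"
    and A_generates: "\<forall>X\<in>sets M. \<exists>Y\<in>sigma_sets (space M) (range A). sdiff X Y \<in> null_sets M"
    and A_dense: "\<forall>X\<in>sets M. \<forall>e>0. \<exists>i. measure M (sdiff (A i) X) < e"
    and "locally_compact_space (euclidean :: 'g topology)"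
    and J_shape: "J = UNIV \<or> (\<exists>N. J = {..<N})"
    and K_compact: "\<forall>i\<in>J. compact (K i) \<and> interior (K i) \<noteq> {}"
    and K_generates: "\<exists>X. X \<subseteq> (\<Union>i\<in>J. K i) \<and> gen_subgroup X = UNIV"
    and \<Gamma>_unbounded: "\<not> (\<exists>C. compact C \<and> \<Gamma> \<subseteq> C)"
  shows "(\<forall>n\<ge>1. \<forall>k\<ge>1. \<forall>\<epsilon>>0. \<forall>T\<in>Mix M \<Gamma>.
            leash_open M A K J \<Gamma> (s_ball M A K J \<Gamma> n k T \<epsilon>))
       \<and> (\<forall>U. leash_open M A K J \<Gamma> U \<longrightarrow>
            (\<forall>S\<in>U. \<exists>n\<ge>1. \<exists>k\<ge>1. \<exists>\<epsilon>>0. \<exists>T\<in>Mix M \<Gamma>.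
               S \<in> s_ball M A K J \<Gamma> n k T \<epsilon> \<and> s_ball M A K J \<Gamma> n k T \<epsilon> \<subseteq> U))"
proof -
  interpret P: prob_space M by fact
  have As: "\<And>i. A i \<in> sets M" using A_sets by auto
  have Gne: "\<Gamma> \<noteq> {}" using \<Gamma>_unbounded by auto
  have Kne: "\<forall>i\<in>J. K i \<noteq> {}" using K_compact interior_subset by blast
  have Kc: "\<forall>i\<in>J. compact (K i)" using K_compact by blast
  show ?thesis
  proof (intro conjI allI impI ballI)
    fix n k \<epsilon> T
    show "leash_open M A K J \<Gamma> (s_ball M A K J \<Gamma> n k T \<epsilon>)"
      by (rule P.part1[OF As Kne Gne])
  next
    fix U S assume "leash_open M A K J \<Gamma> U" "S \<in> U"
    then show "\<exists>n\<ge>1. \<exists>k\<ge>1. \<exists>\<epsilon>>0. \<exists>T\<in>Mix M \<Gamma>.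
               S \<in> s_ball M A K J \<Gamma> n k T \<epsilon> \<and> s_ball M A K J \<Gamma> n k T \<epsilon> \<subseteq> U"
      by (rule P.part2[OF As A_dense Kc Kne Gne])
  qed
qed

end
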